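(* Let $g(x)=1-(1-x^2)^4$ for $|x|\le1$ and $g(x)=1$ otherwise. Fix $0\le q_o<\widetilde{q_o}$ and let $(q,p)$, respectively $(\widetilde q,\widetilde p)$, be the global solutions of $\dot q=p$, $\dot p=-g'(q)$ with initial data $(q_o,2)$, respectively $(\widetilde{q_o},2)$, at time $0$. Then $q(t)<\widetilde q(t)$ for all $t\ge0$. *)

theory Defs
  imports "HOL-Analysis.Analysis"
begin

definition g :: "real \<Rightarrow> real" where
  "g x = (if \<bar>x\<bar> \<le> 1 then 1 - (1 - x^2)^4 else 1)"

end

theory Submission
  imports Defs
begin

lemma g_diff: "g differentiable (at x)"
proof -
  let ?S = "{-1..1::real}" let ?T = "- {-1..1::real}"
  have eq: "g = (\<lambda>x. if x \<in> ?S then 1 - (1-x^2)^4 else 1)"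
    by (auto simp: g_def fun_eq_iff abs_le_iff)
  have cT: "closure ?T \<subseteq> {x. 1 \<le> \<bar>x\<bar>}"
    by (rule closure_minimal) (auto intro!: closed_Collect_le continuous_intros)
  have pd: "((\<lambda>x::real. 1 - (1-x^2)^4) has_derivative ((*) (8*y*(1-y^2)^3))) (at y within U)" for y U
  proof -
    have "((\<lambda>x::real. 1 - (1-x^2)^4) has_real_derivative (8*y*(1-y^2)^3)) (at y within U)"
      by (auto intro!: derivative_eq_intros simp: algebra_simps)
    then show ?thesis by (simp add: has_field_derivative_def)
  qed
  have "((\<lambda>x. if x \<in> ?S then 1 - (1-x^2)^4 else 1) has_derivative
      (if x \<in> ?S then ((*) (8*x*(1-x^2)^3)) else (\<lambda>h. 0))) (at x within (?S \<union> ?T))"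
  proof (rule has_derivative_If_within_closures)
    show "((\<lambda>x. 1::real) has_derivative (\<lambda>h. 0)) (at x within ?T \<union> (closure ?S \<inter> closure ?T))"
      by (rule has_derivative_const)
  next
    assume "x \<in> closure ?S" "x \<in> closure ?T"
    then have "\<bar>x\<bar> = 1" using cT by auto
    then have "x = 1 \<or> x = -1" by linarith
    then show "1 - (1 - x\<^sup>2) ^ 4 = 1" by auto
  next
    assume "x \<in> closure ?S" "x \<in> closure ?T"
    then have "\<bar>x\<bar> = 1" using cT by auto
    then have "x = 1 \<or> x = -1" by linarith
    then show "((*) (8*x*(1-x^2)^3)) = (\<lambda>h. 0)" by auto
  qed (auto intro: pd)
  then show ?thesis unfolding eq differentiable_def by auto
qed


lemma g_bounds: "0 \<le> g x \<and> g x \<le> 1"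
proof (cases "\<bar>x\<bar> \<le> 1")
  case True
  then have "0 \<le> 1 - x^2" "1 - x^2 \<le> 1" by (auto simp: abs_square_le_1)
  then have "0 \<le> (1-x^2)^4" "(1-x^2)^4 \<le> 1" by (auto intro: power_le_one)
  then show ?thesis using True by (simp add: g_def)
qed (simp add: g_def)

lemma g_one: "1 \<le> \<bar>x\<bar> \<Longrightarrow> g x = 1"
proof -
  assume a: "1 \<le> \<bar>x\<bar>"
  show ?thesis
  proof (cases "\<bar>x\<bar> = 1")
    case True
    then have "x^2 = 1" by (metis abs_power2 power2_eq_1_iff power_abs abs_1)
    then show ?thesis by (simp add: g_def)
  qed (use a in \<open>simp add: g_def\<close>)
qed

lemma g_lt: assumes "0 \<le> a" "a < b" "a < 1" shows "g a < g b"
proof -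
  have ga: "g a = 1 - (1 - a^2)^4" using assms by (simp add: g_def)
  show ?thesis
  proof (cases "b < 1")
    case True
    have "a^2 < b^2" using assms by (simp add: power_strict_mono)
    moreover have "b^2 < 1" using True assms by (simp add: power_less_one_iff)
    ultimately have "(1-b^2)^4 < (1-a^2)^4" by (intro power_strict_mono) auto
    then show ?thesis using True assms ga by (simp add: g_def)
  next
    case False
    then have "g b = 1" by (intro g_one) auto
    moreover have "a^2 < 1" using assms by (simp add: power_less_one_iff)
    ultimately show ?thesis using ga by simp
  qed
qed

lemma traj:
  fixes q p :: "real \<Rightarrow> real"
  assumes dq: "\<And>t. (q has_real_derivative p t) (at t)"
    and dp: "\<And>t. (p has_real_derivative - deriv g (q t)) (at t)"
    and p0: "p 0 = 2"
  shows "\<And>t. (p t)^2 = 4 + 2 * g (q 0) - 2 * g (q t)"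
    and "\<And>t. t \<ge> 0 \<Longrightarrow> p t > 0"
    and "\<And>t. t \<ge> 0 \<Longrightarrow> q t \<ge> q 0"
proof -
  have gd: "\<And>x. (g has_real_derivative deriv g x) (at x)"
    using g_diff DERIV_deriv_iff_real_differentiable by blast
  have "\<forall>t. ((\<lambda>t. (p t)^2 + 2 * g (q t)) has_real_derivative 0) (at t)"
  proof
    fix t
    have "((\<lambda>t. (p t)^2 + 2 * g (q t)) has_real_derivative
       2 * p t * (- deriv g (q t)) + 2 * (deriv g (q t) * p t)) (at t)"
    proof -
      have c: "((\<lambda>t. g (q t)) has_real_derivative deriv g (q t) * p t) (at t)"
        by (rule DERIV_chain2[OF gd dq])
      have c2: "((\<lambda>t. (p t)^2) has_real_derivative 2 * p t * (- deriv g (q t))) (at t)"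
        using DERIV_power[OF dp[of t], of 2] by (simp add: mult_ac)
      show ?thesis using DERIV_add[OF c2 DERIV_cmult[OF c, of 2]] by simp
    qed
    then show "((\<lambda>t. (p t)^2 + 2 * g (q t)) has_real_derivative 0) (at t)" by simp
  qed
  note cst = DERIV_isconst_all[OF this]
  show E: "(p t)^2 = 4 + 2 * g (q 0) - 2 * g (q t)" for t
    using cst[of t 0] p0 by (simp add: power2_eq_square)
  have pne: "p t \<noteq> 0" for t
  proof
    assume "p t = 0"
    with E[of t] g_bounds[of "q 0"] g_bounds[of "q t"] show False by simp
  qed
  have contp: "continuous_on S p" for S
    using dp by (meson DERIV_continuous continuous_at_imp_continuous_on)
  show pos: "p t > 0" if "t \<ge> 0" for t
  proof (rule ccontr)
    assume "\<not> p t > 0"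
    then have "p t \<le> 0" by simp
    then have "\<exists>s. 0 \<le> s \<and> s \<le> t \<and> p s = 0"
      using IVT2'[of p t 0 0] p0 that contp by simp
    with pne show False by blast
  qed
  show "q t \<ge> q 0" if "t \<ge> 0" for t
  proof (cases "t = 0")
    case False
    then have "0 < t" using that by simp
    from MVT2[OF this, of q p] dq obtain z where "0 < z" "z < t" "q t - q 0 = (t - 0) * p z"
      by blast
    with pos[of z] \<open>0 < t\<close> show ?thesis by (smt (verit) mult_pos_pos)
  qed simp
qed


theorem lemma5p11:
  fixes q p qt pt :: "real \<Rightarrow> real" and q\<^sub>o qt\<^sub>o :: real
  assumes "0 \<le> q\<^sub>o" and "q\<^sub>o < qt\<^sub>o"
    and "\<And>t. (q has_real_derivative p t) (at t)"
    and "\<And>t. (p has_real_derivative - deriv g (q t)) (at t)"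
    and "q 0 = q\<^sub>o" and "p 0 = 2"
    and "\<And>t. (qt has_real_derivative pt t) (at t)"
    and "\<And>t. (pt has_real_derivative - deriv g (qt t)) (at t)"
    and "qt 0 = qt\<^sub>o" and "pt 0 = 2"
  shows "\<forall>t\<ge>0. q t < qt t"
proof -
  note T1 = traj[OF assms(3,4,6)]
  note T2 = traj[OF assms(7,8,10)]
  define d where "d t = qt t - q t" for t
  have dd: "(d has_real_derivative pt t - p t) (at t)" for t
    unfolding d_def[abs_def] by (intro DERIV_diff assms(3,7))
  have d0: "d 0 > 0" using assms by (simp add: d_def)
  have contd: "continuous_on S d" for S
    using dd by (meson DERIV_continuous continuous_at_imp_continuous_on)
  show ?thesis
  proof (cases "q\<^sub>o < 1")
    case False
    have "d t > 0" if "t > 0" for t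
    proof -
      from MVT2[OF that, of d "\<lambda>t. pt t - p t"] dd obtain z where
        z: "0 < z" "z < t" "d t - d 0 = (t - 0) * (pt z - p z)" by blast
      have "q z \<ge> 1" using T1(3)[of z] z assms False by simp
      then have g1: "g (q z) = 1" by (intro g_one) simp
      have "qt z \<ge> 1" using T2(3)[of z] z assms False by simp
      then have g2: "g (qt z) = 1" by (intro g_one) simp
      have g3: "g q\<^sub>o = 1" "g qt\<^sub>o = 1" using False assms by (auto intro!: g_one)
      have "(p z)^2 = 2^2" using T1(1)[of z] g1 g3 assms by simp
      then have "p z = 2" using T1(2)[of z] z power2_eq_iff_nonneg[of "p z" 2] by linarith
      moreover have "(pt z)^2 = 2^2" using T2(1)[of z] g2 g3 assms by simp
      then have "pt z = 2" using T2(2)[of z] z power2_eq_iff_nonneg[of "pt z" 2] by linarith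
      ultimately show ?thesis using z d0 by simp
    qed
    then show ?thesis using d0 by (auto simp: d_def le_less)
  next
    case True
    have glt: "g q\<^sub>o < g qt\<^sub>o" using g_lt[OF assms(1,2) True] .
    show ?thesis
    proof (rule ccontr)
      assume "\<not> (\<forall>t\<ge>0. q t < qt t)"
      then obtain t where t: "t \<ge> 0" "d t \<le> 0" by (auto simp: d_def)
      define Z where "Z = {s. 0 \<le> s \<and> d s = 0}"
      have "\<exists>s. 0 \<le> s \<and> s \<le> t \<and> d s = 0"
        using IVT2'[of d t 0 0] t d0 contd by simp
      then have Zne: "Z \<noteq> {}" by (auto simp: Z_def)
      have Zcl: "closed Z" unfolding Z_def
        using contd[of UNIV]
        by (intro closed_Collect_conj closed_Collect_le closed_Collect_eq continuous_intros) 
          (auto simp: continuous_on_eq_continuous_within)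
      have Zbd: "bdd_below Z" by (auto simp: Z_def bdd_below_def)
      define t1 where "t1 = Inf Z"
      have t1Z: "t1 \<in> Z" unfolding t1_def using closed_contains_Inf[OF Zne Zbd Zcl] .
      then have t1: "0 \<le> t1" "d t1 = 0" by (auto simp: Z_def)
      then have t1p: "0 < t1" using d0 by (cases "t1 = 0") auto
      have before: "d s > 0" if "0 \<le> s" "s < t1" for s
      proof (rule ccontr)
        assume "\<not> d s > 0"
        then have "\<exists>r. 0 \<le> r \<and> r \<le> s \<and> d r = 0"
          using IVT2'[of d s 0 0] that d0 contd by simp
        then obtain r where "r \<in> Z" "r \<le> s" by (auto simp: Z_def)
        then have "t1 \<le> r" unfolding t1_def using Zbd by (simp add: cInf_lower)
        with \<open>r \<le> s\<close> \<open>s < t1\<close> show False by simp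
      qed
      have eqpos: "q t1 = qt t1" using t1 by (simp add: d_def)
      have "(pt t1)^2 > (p t1)^2"
        using T1(1)[of t1] T2(1)[of t1] eqpos glt assms by simp
      moreover have "p t1 > 0" "pt t1 > 0" using T1(2) T2(2) t1 by auto
      ultimately have "pt t1 - p t1 > 0"
        by (smt (verit) power_mono)
      from DERIV_pos_inc_left[OF dd this] obtain e where
        e: "e > 0" "\<And>h. h > 0 \<Longrightarrow> h < e \<Longrightarrow> d (t1 - h) < d t1" by blast
      define h where "h = min (e/2) t1"
      have "h > 0" "h < e" "h \<le> t1" using e t1p by (auto simp: h_def)
      then have "d (t1 - h) < 0" using e t1 by auto
      moreover have "d (t1 - h) > 0" using before \<open>h > 0\<close> \<open>h \<le> t1\<close> by simp
      ultimately show False by simp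
    qed
  qed
qed

end
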